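(* Let $K\ge2$ and $b\in\mathbb{R}$. The operator $A+B$ on $\ell^2(\mathcal{C})$ has only pure point spectrum, and $\ell^2(\mathcal{C})$ has an orthonormal basis of eigenfunctions of $A+B$ that are compactly (finitely) supported.
   Context: The canopy graph $\mathcal{C}$: starting from an infinite outermost layer $\partial\mathcal{C}$, each layer is partitioned into sets of $K$ elements, the elements of each set being joined to a common vertex of the next layer, recursively for infinitely many layers. $A$ is the adjacency operator of $\mathcal{C}$, $(A\psi)(x)=\sum_{y:\mathrm{dist}(x,y)=1}\psi(y)$, and $B$ is multiplication by the constant $b$ on $\partial\mathcal{C}$ and by $0$ elsewhere. *)

theory Defs
  imports "HOL-Analysis.Analysis"
begin

text \<open>Vertices are pairs (n, j) :: nat \<times> nat,
  where n is the layer (n = 0 is the outermost layer, the boundary) and j indexes the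
  (countably infinitely many) vertices of that layer.\<close>

type_synonym canopy_vertex = "nat \<times> nat"

definition canopy_parent :: "nat \<Rightarrow> canopy_vertex \<Rightarrow> canopy_vertex" where
  "canopy_parent K x = (Suc (fst x), snd x div K)"

definition canopy_adj :: "nat \<Rightarrow> canopy_vertex \<Rightarrow> canopy_vertex \<Rightarrow> bool" where
  "canopy_adj K x y \<longleftrightarrow> y = canopy_parent K x \<or> x = canopy_parent K y"

definition canopy_boundary :: "canopy_vertex set" where
  "canopy_boundary = {x. fst x = 0}"

definition canopy_A :: "nat \<Rightarrow> (canopy_vertex \<Rightarrow> complex) \<Rightarrow> canopy_vertex \<Rightarrow> complex" where
  "canopy_A K \<psi> x = (\<Sum>y\<in>{y. canopy_adj K x y}. \<psi> y)"

definition canopy_B :: "real \<Rightarrow> (canopy_vertex \<Rightarrow> complex) \<Rightarrow> canopy_vertex \<Rightarrow> complex" where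
  "canopy_B b \<psi> x = (if x \<in> canopy_boundary then complex_of_real b * \<psi> x else 0)"

definition canopy_H :: "nat \<Rightarrow> real \<Rightarrow> (canopy_vertex \<Rightarrow> complex) \<Rightarrow> canopy_vertex \<Rightarrow> complex" where
  "canopy_H K b \<psi> x = canopy_A K \<psi> x + canopy_B b \<psi> x"

definition l2 :: "('v \<Rightarrow> complex) set" where
  "l2 = {\<psi>. (\<lambda>x. (cmod (\<psi> x))^2) summable_on UNIV}"

definition l2_inner :: "('v \<Rightarrow> complex) \<Rightarrow> ('v \<Rightarrow> complex) \<Rightarrow> complex" where
  "l2_inner \<phi> \<psi> = (\<Sum>\<^sub>\<infinity>x. cnj (\<phi> x) * \<psi> x)"

definition is_eigenfunction :: "(('v \<Rightarrow> complex) \<Rightarrow> 'v \<Rightarrow> complex) \<Rightarrow> ('v \<Rightarrow> complex) \<Rightarrow> bool" where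
  "is_eigenfunction H \<phi> \<longleftrightarrow> \<phi> \<in> l2 \<and> \<phi> \<noteq> (\<lambda>_. 0) \<and> (\<exists>c. H \<phi> = (\<lambda>x. c * \<phi> x))"

text \<open>Pure point spectrum: the eigenvectors are total in l^2 (the point spectral subspace is everything).\<close>
definition pure_point_spectrum :: "(('v \<Rightarrow> complex) \<Rightarrow> 'v \<Rightarrow> complex) \<Rightarrow> bool" where
  "pure_point_spectrum H \<longleftrightarrow>
     (\<forall>\<psi>\<in>l2. (\<forall>\<phi>. is_eigenfunction H \<phi> \<longrightarrow> l2_inner \<phi> \<psi> = 0) \<longrightarrow> \<psi> = (\<lambda>_. 0))"

definition orthonormal_basis_l2 :: "('v \<Rightarrow> complex) set \<Rightarrow> bool" where
  "orthonormal_basis_l2 E \<longleftrightarrow> E \<subseteq> l2 \<and>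
     (\<forall>\<phi>\<in>E. \<forall>\<psi>\<in>E. l2_inner \<phi> \<psi> = (if \<phi> = \<psi> then 1 else 0)) \<and>
     (\<forall>\<psi>\<in>l2. (\<forall>\<phi>\<in>E. l2_inner \<phi> \<psi> = 0) \<longrightarrow> \<psi> = (\<lambda>_. 0))"

end

theory Submission
  imports Defs "HOL-Computational_Algebra.Fundamental_Theorem_Algebra"
begin

fun cP :: "nat \<Rightarrow> real \<Rightarrow> nat \<Rightarrow> complex poly" where
  "cP K b 0 = 1"
| "cP K b (Suc 0) = [:- complex_of_real b, 1:]"
| "cP K b (Suc (Suc n)) = [:0,1:] * cP K b (Suc n) - smult (of_nat K) (cP K b n)"

lemma cP_coeff: "coeff (cP K b n) n = 1 \<and> (\<forall>k>n. coeff (cP K b n) k = 0)"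
proof (induction K b n rule: cP.induct)
  case (3 K b n)
  then show ?case by (auto simp: coeff_pCons split: nat.splits)
qed (auto simp: coeff_pCons split: nat.splits)

lemma cP_degree: "degree (cP K b n) = n"
  using cP_coeff[of K b n] by (metis le_degree degree_le linorder_not_le order_antisym zero_neq_one)

lemma cP_cnj: "poly (cP K b n) (cnj z) = cnj (poly (cP K b n) z)"
  by (induction K b n rule: cP.induct) auto

lemma cP_rec: "poly (cP K b (Suc (Suc n))) z = z * poly (cP K b (Suc n)) z - of_nat K * poly (cP K b n) z"
  by simp

lemma pow_Suc_diff: "i \<le> n \<Longrightarrow> (x::'a::monoid_mult) ^ (Suc n - i) = x * x ^ (n - i)"
  by (simp add: Suc_diff_le)

lemma cP_CD:
  "(z - w) * (\<Sum>i<Suc n. of_nat K ^ (n - i) * poly (cP K b i) z * poly (cP K b i) w)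
   = poly (cP K b (Suc n)) z * poly (cP K b n) w - poly (cP K b n) z * poly (cP K b (Suc n)) w"
proof (induction n)
  case 0
  then show ?case by (simp add: algebra_simps)
next
  case (Suc n)
  define S where "S = (\<Sum>i<Suc n. of_nat K ^ (n - i) * poly (cP K b i) z * poly (cP K b i) w)"
  have "(\<Sum>i<Suc (Suc n). of_nat K ^ (Suc n - i) * poly (cP K b i) z * poly (cP K b i) w)
     = (\<Sum>i<Suc n. of_nat K * (of_nat K ^ (n - i) * poly (cP K b i) z * poly (cP K b i) w))
       + poly (cP K b (Suc n)) z * poly (cP K b (Suc n)) w"
    by (subst sum.lessThan_Suc) (auto intro!: sum.cong simp: pow_Suc_diff)
  also have "\<dots> = of_nat K * S + poly (cP K b (Suc n)) z * poly (cP K b (Suc n)) w"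
    by (simp only: S_def sum_distrib_left)
  finally have eq: "(\<Sum>i<Suc (Suc n). of_nat K ^ (Suc n - i) * poly (cP K b i) z * poly (cP K b i) w)
     = of_nat K * S + poly (cP K b (Suc n)) z * poly (cP K b (Suc n)) w" .
  have IH: "(z - w) * S = poly (cP K b (Suc n)) z * poly (cP K b n) w - poly (cP K b n) z * poly (cP K b (Suc n)) w"
    using Suc.IH by (simp add: S_def)
  have "(z - w) * (of_nat K * S + poly (cP K b (Suc n)) z * poly (cP K b (Suc n)) w)
      = of_nat K * ((z - w) * S) + (z - w) * (poly (cP K b (Suc n)) z * poly (cP K b (Suc n)) w)"
    by (simp add: algebra_simps)
  also have "\<dots> = poly (cP K b (Suc (Suc n))) z * poly (cP K b (Suc n)) w - poly (cP K b (Suc n)) z * poly (cP K b (Suc (Suc n))) w"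
    unfolding IH cP_rec by (simp add: algebra_simps)
  finally show ?case unfolding eq .
qed

lemma smult_sum_right: "smult c (sum f A) = (\<Sum>i\<in>A. smult c (f i))"
  by (induct A rule: infinite_finite_induct) (auto simp: smult_add_right)

lemma cP_deriv:
  "pderiv (cP K b (Suc n)) * cP K b n - cP K b (Suc n) * pderiv (cP K b n)
   = (\<Sum>i<Suc n. smult (of_nat K ^ (n - i)) (cP K b i * cP K b i))"
proof (induction n)
  case 0
  then show ?case by (simp add: pderiv_pCons)
next
  case (Suc n)
  define S where "S = (\<Sum>i<Suc n. smult (of_nat K ^ (n - i)) (cP K b i * cP K b i))"
  have "(\<Sum>i<Suc (Suc n). smult (of_nat K ^ (Suc n - i)) (cP K b i * cP K b i))
     = (\<Sum>i<Suc n. smult (of_nat K) (smult (of_nat K ^ (n - i)) (cP K b i * cP K b i)))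
       + cP K b (Suc n) * cP K b (Suc n)"
    by (subst sum.lessThan_Suc) (auto intro!: sum.cong simp: pow_Suc_diff)
  also have "\<dots> = smult (of_nat K) S + cP K b (Suc n) * cP K b (Suc n)"
    by (simp only: S_def smult_sum_right)
  finally have eq: "(\<Sum>i<Suc (Suc n). smult (of_nat K ^ (Suc n - i)) (cP K b i * cP K b i))
     = smult (of_nat K) S + cP K b (Suc n) * cP K b (Suc n)" .
  have IH: "pderiv (cP K b (Suc n)) * cP K b n - cP K b (Suc n) * pderiv (cP K b n) = S"
    using Suc.IH by (simp add: S_def)
  have d: "pderiv (cP K b (Suc (Suc n))) = cP K b (Suc n) + [:0,1:] * pderiv (cP K b (Suc n)) - smult (of_nat K) (pderiv (cP K b n))"
    by (simp add: pderiv_mult pderiv_pCons pderiv_diff pderiv_smult)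
  have "pderiv (cP K b (Suc (Suc n))) * cP K b (Suc n) - cP K b (Suc (Suc n)) * pderiv (cP K b (Suc n))
     = smult (of_nat K) (pderiv (cP K b (Suc n)) * cP K b n - cP K b (Suc n) * pderiv (cP K b n)) + cP K b (Suc n) * cP K b (Suc n)"
    unfolding d by (simp add: algebra_simps smult_diff_right)
  then show ?case unfolding eq IH .
qed


lemma cP_possum:
  assumes "K > 0"
  shows "(\<Sum>i<Suc n. of_nat K ^ (n - i) * poly (cP K b i) z * cnj (poly (cP K b i) z)) \<noteq> 0"
proof -
  have eq: "(\<Sum>i<Suc n. of_nat K ^ (n - i) * poly (cP K b i) z * cnj (poly (cP K b i) z))
      = complex_of_real (\<Sum>i<Suc n. real K ^ (n - i) * (cmod (poly (cP K b i) z))^2)"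
    unfolding of_real_sum of_real_mult complex_norm_square by (simp add: mult.assoc)
  have "(\<Sum>i<Suc n. real K ^ (n - i) * (cmod (poly (cP K b i) z))^2)
      = real K ^ n + (\<Sum>i<n. real K ^ (n - Suc i) * (cmod (poly (cP K b (Suc i)) z))^2)"
    by (subst sum.lessThan_Suc_shift) simp
  also have "\<dots> > 0"
    using assms by (intro add_pos_nonneg sum_nonneg) auto
  finally have pos: "0 < (\<Sum>i<Suc n. real K ^ (n - i) * (cmod (poly (cP K b i) z))^2)" .
  have "complex_of_real (\<Sum>i<Suc n. real K ^ (n - i) * (cmod (poly (cP K b i) z))^2) \<noteq> 0"
    using pos by (simp only: of_real_eq_0_iff)
  then show ?thesis unfolding eq .
qed

lemma cP_root_real:
  assumes "K > 0" "poly (cP K b (Suc n)) z = 0"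
  shows "cnj z = z"
proof -
  have "(z - cnj z) * (\<Sum>i<Suc n. of_nat K ^ (n - i) * poly (cP K b i) z * cnj (poly (cP K b i) z)) = 0"
    using cP_CD[where z=z and w="cnj z" and n=n and K=K and b=b] assms(2) by (simp add: cP_cnj)
  then show ?thesis using cP_possum[OF assms(1)] by simp
qed

lemma cP_rsquarefree:
  assumes "K > 0"
  shows "rsquarefree (cP K b (Suc n))"
  unfolding rsquarefree_roots
proof (intro allI notI)
  fix a assume a: "poly (cP K b (Suc n)) a = 0 \<and> poly (pderiv (cP K b (Suc n))) a = 0"
  then have ra: "cnj a = a" using cP_root_real[OF assms] by blast
  have re: "cnj (poly (cP K b i) a) = poly (cP K b i) a" for i
    using cP_cnj[of K b i a] ra by simp
  have "poly (pderiv (cP K b (Suc n)) * cP K b n - cP K b (Suc n) * pderiv (cP K b n)) a = 0"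
    using a by simp
  then have "(\<Sum>i<Suc n. of_nat K ^ (n - i) * poly (cP K b i) a * cnj (poly (cP K b i) a)) = 0"
    unfolding cP_deriv poly_sum by (simp add: re mult.assoc)
  then show False using cP_possum[OF assms] by blast
qed

lemma cP_lead: "lead_coeff (cP K b n) = 1"
  unfolding cP_degree by (rule conjunct1[OF cP_coeff])

lemma cP_nonzero: "cP K b n \<noteq> 0"
  using cP_lead[of K b n] by auto

lemma cP_card_roots:
  assumes "K > 0"
  shows "card {z. poly (cP K b (Suc n)) z = 0} = Suc n"
proof -
  let ?p = "cP K b (Suc n)"
  have "smult (lead_coeff ?p) (\<Prod>z|poly ?p z = 0. [:-z, 1:]) = ?p"
    by (rule complex_poly_decompose_rsquarefree[OF cP_rsquarefree[OF assms]])
  then have eq: "(\<Prod>z|poly ?p z = 0. [:-z, 1:]) = ?p" by (simp only: cP_lead smult_1_left)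
  have "degree ?p = (\<Sum>z | poly ?p z = 0. degree [:-z, 1:])"
    by (subst eq[symmetric], rule degree_prod_sum_eq) simp
  also have "\<dots> = card {z. poly ?p z = 0}" by simp
  finally show ?thesis by (simp only: cP_degree)
qed

lemma cP_triangular:
  "(\<Sum>i<n. smult (w i) (cP K b i)) = 0 \<Longrightarrow> \<forall>i<n. w i = 0"
proof (induction n)
  case 0 then show ?case by simp
next
  case (Suc n)
  have "coeff (\<Sum>i<Suc n. smult (w i) (cP K b i)) n = w n"
  proof -
    have "coeff (\<Sum>i<Suc n. smult (w i) (cP K b i)) n = (\<Sum>i<Suc n. w i * coeff (cP K b i) n)"
      by (simp add: coeff_sum)
    also have "\<dots> = (\<Sum>i<n. w i * coeff (cP K b i) n) + w n"
      using cP_coeff[of K b n] by (simp add: sum.lessThan_Suc)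
    also have "(\<Sum>i<n. w i * coeff (cP K b i) n) = 0"
      using cP_coeff[of K b] by (intro sum.neutral) auto
    finally show ?thesis by simp
  qed
  then have wn: "w n = 0" unfolding Suc.prems by simp
  then have "(\<Sum>i<n. smult (w i) (cP K b i)) = 0" using Suc.prems by simp
  then show ?case using Suc.IH wn less_Suc_eq by auto
qed

lemma cP_complete:
  assumes "K > 0"
    and h: "\<And>x::real. poly (cP K b m) (of_real x) = 0 \<Longrightarrow> (\<Sum>i<m. poly (cP K b i) (of_real x) * w i) = 0"
  shows "\<forall>i<m. w i = 0"
proof (cases m)
  case 0 then show ?thesis by simp
next
  case (Suc n)
  define Q where "Q = (\<Sum>i<m. smult (w i) (cP K b i))"
  have Qv: "poly Q z = (\<Sum>i<m. poly (cP K b i) z * w i)" for z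
    unfolding Q_def poly_sum by (simp only: poly_smult mult.commute)
  have "Q = 0"
  proof (rule ccontr)
    assume Q0: "Q \<noteq> 0"
    have sub: "{z. poly (cP K b m) z = 0} \<subseteq> {z. poly Q z = 0}"
    proof
      fix z assume "z \<in> {z. poly (cP K b m) z = 0}"
      then have z: "poly (cP K b m) z = 0" by simp
      then have "cnj z = z" using cP_root_real[OF assms(1)] unfolding Suc by blast
      then have zr: "of_real (Re z) = z" by (simp only: Reals_cnj_iff[symmetric] of_real_Re)
      have "(\<Sum>i<m. poly (cP K b i) (of_real (Re z)) * w i) = 0"
        by (rule h) (simp only: zr z)
      then show "z \<in> {z. poly Q z = 0}" unfolding zr Qv by simp
    qed
    have "card {z. poly (cP K b m) z = 0} \<le> card {z. poly Q z = 0}"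
      by (rule card_mono[OF poly_roots_finite[OF Q0] sub])
    then have c1: "m \<le> card {z. poly Q z = 0}"
      unfolding Suc cP_card_roots[OF assms(1)] .
    have c2: "card {z. poly Q z = 0} \<le> degree Q" by (rule card_poly_roots_bound[OF Q0])
    have "coeff Q k = 0" if "k > n" for k
    proof -
      have "coeff Q k = (\<Sum>i<m. w i * coeff (cP K b i) k)"
        unfolding Q_def coeff_sum by simp
      also have "\<dots> = 0"
        using that Suc cP_coeff[of K b] by (intro sum.neutral) auto
      finally show ?thesis .
    qed
    then have "degree Q \<le> n" by (simp add: degree_le) 
    then show False using c1 c2 Suc by linarith
  qed
  then show ?thesis using cP_triangular unfolding Q_def by blast
qed

lemma cP_orth:
  assumes "K > 0" "poly (cP K b (Suc n)) z = 0" "poly (cP K b (Suc n)) w = 0" "z \<noteq> w"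
  shows "(\<Sum>i<Suc n. of_nat K ^ (n - i) * poly (cP K b i) z * poly (cP K b i) w) = 0"
proof -
  have "(z - w) * (\<Sum>i<Suc n. of_nat K ^ (n - i) * poly (cP K b i) z * poly (cP K b i) w) = 0"
    unfolding cP_CD assms(2,3) by simp
  then show ?thesis using assms(4) by simp
qed

definition rou :: "nat \<Rightarrow> complex" where "rou K = cis (2 * pi / real K)"

lemma pow_comm: "((x::'a::monoid_mult) ^ s) ^ t = (x ^ t) ^ s"
  by (metis power_mult mult.commute)

lemma rou_u: "cnj (rou K ^ a) * rou K ^ c = cis (2 * pi * (real c - real a) / real K)"
proof -
  have "cnj (rou K ^ a) * rou K ^ c = cis (- (real a * (2 * pi / real K))) * cis (real c * (2 * pi / real K))"
  proof -
    have e1: "rou K ^ n = cis (real n * (2 * pi / real K))" for n unfolding rou_def by (rule Complex.DeMoivre)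
    show ?thesis unfolding e1 cis_cnj ..
  qed
  also have "\<dots> = cis (- (real a * (2 * pi / real K)) + real c * (2 * pi / real K))" by (rule cis_mult)
  also have "- (real a * (2 * pi / real K)) + real c * (2 * pi / real K) = 2 * pi * (real c - real a) / real K"
    by (simp add: diff_divide_distrib algebra_simps)
  finally show ?thesis .
qed

lemma rou_u_ne1:
  assumes "K > 0" "a < K" "c < K" "a \<noteq> c"
  shows "cis (2 * pi * (real c - real a) / real K) \<noteq> 1"
proof
  assume "cis (2 * pi * (real c - real a) / real K) = 1"
  then have "cos (2 * pi * (real c - real a) / real K) = 1"
    by (metis cis.sel(1) one_complex.simps(1))
  then obtain n :: int where n: "2 * pi * (real c - real a) / real K = of_int n * 2 * pi"
    by (auto simp: cos_one_2pi_int)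
  have "pi * (2 * (real c - real a)) = pi * (2 * (of_int n * real K))"
    using n assms(1) by (simp add: field_simps)
  then have "real c - real a = of_int n * real K" by simp
  moreover have "real c - real a < real K" "real c - real a > - real K" "real c - real a \<noteq> 0"
    using assms by auto
  ultimately show False
  proof -
    assume e: "real c - real a = of_int n * real K" and l: "real c - real a < real K"
      "real c - real a > - real K" "real c - real a \<noteq> 0"
    consider "n = 0" | "n \<ge> 1" | "n \<le> -1" by linarith
    then show False
    proof cases
      case 1 then show ?thesis using e l by simp
    next
      case 2
      then have "of_int n * real K \<ge> 1 * real K"
        by (intro mult_right_mono) auto
      then show ?thesis using e l by linarith
    next
      case 3
      then have "of_int n * real K \<le> (-1) * real K"
        by (intro mult_right_mono) auto
      then show ?thesis using e l by linarith
    qed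
  qed
qed

lemma rou_uK:
  assumes "K > 0"
  shows "cis (2 * pi * (real c - real a) / real K) ^ K = 1"
proof -
  have "cis (2 * pi * (real c - real a) / real K) ^ K = cis (2 * pi * (real c - real a))"
  proof -
    have eqK: "real K * (2 * pi * (real c - real a) / real K) = 2 * pi * (real c - real a)" using assms by simp
    show ?thesis unfolding Complex.DeMoivre eqK ..
  qed
  also have "\<dots> = 1"
  proof -
    have "real c - real a = of_int (int c - int a)" by simp
    then have "(real c - real a) \<in> \<int>" by (metis Ints_of_int)
    then show ?thesis by (rule cis_multiple_2pi)
  qed
  finally show ?thesis .
qed

lemma rou_orth:
  assumes "K > 0" "a < K" "c < K"
  shows "(\<Sum>r<K. cnj ((rou K ^ a) ^ r) * (rou K ^ c) ^ r) = (if a = c then of_nat K else 0)"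
proof -
  let ?u = "cis (2 * pi * (real c - real a) / real K)"
  have t: "cnj ((rou K ^ a) ^ r) * (rou K ^ c) ^ r = ?u ^ r" for r
    by (metis complex_cnj_power power_mult_distrib rou_u)
  show ?thesis
  proof (cases "a = c")
    case True
    then have "?u = 1" by simp
    then show ?thesis unfolding t using True by simp
  next
    case False
    have "?u \<noteq> 1" using rou_u_ne1[OF assms False] .
    then have "(\<Sum>r<K. ?u ^ r) = 0" using rou_uK[OF assms(1), of c a] by (simp add: sum_gp_strict)
    then show ?thesis unfolding t using False by simp
  qed
qed

lemma rou_sum0:
  assumes "K > 0" "0 < s" "s < K"
  shows "(\<Sum>r<K. (rou K ^ s) ^ r) = 0"
  using rou_orth[OF assms(1), of 0 s] assms by simp

lemma rou_inv:
  assumes K: "K > 0"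
    and h: "\<And>s. 0 < s \<Longrightarrow> s < K \<Longrightarrow> (\<Sum>r<K. cnj ((rou K ^ s) ^ r) * \<beta> r) = 0"
    and t: "t < K"
  shows "\<beta> t = \<beta> 0"
proof -
  define \<gamma> where "\<gamma> s = (\<Sum>r<K. cnj ((rou K ^ s) ^ r) * \<beta> r)" for s
  have main: "(\<Sum>s<K. (rou K ^ s) ^ t' * \<gamma> s) = of_nat K * \<beta> t'" if t': "t' < K" for t'
  proof -
    have "(\<Sum>s<K. (rou K ^ s) ^ t' * \<gamma> s)
        = (\<Sum>s<K. \<Sum>r<K. \<beta> r * (cnj ((rou K ^ r) ^ s) * (rou K ^ t') ^ s))"
      unfolding \<gamma>_def sum_distrib_left
    proof (intro sum.cong refl)
      fix s r
      show "(rou K ^ s) ^ t' * (cnj ((rou K ^ s) ^ r) * \<beta> r) = \<beta> r * (cnj ((rou K ^ r) ^ s) * (rou K ^ t') ^ s)"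
        by (simp only: pow_comm[of "rou K" s t'] pow_comm[of "rou K" s r] mult_ac)
    qed
    also have "\<dots> = (\<Sum>r<K. \<beta> r * (\<Sum>s<K. cnj ((rou K ^ r) ^ s) * (rou K ^ t') ^ s))"
      by (subst sum.swap) (simp add: sum_distrib_left)
    also have "\<dots> = (\<Sum>r<K. \<beta> r * (if r = t' then of_nat K else 0))"
      using rou_orth[OF K _ t'] by (intro sum.cong refl) simp
    also have "\<dots> = (\<Sum>r<K. if r = t' then of_nat K * \<beta> r else 0)"
      by (intro sum.cong refl) simp
    also have "\<dots> = of_nat K * \<beta> t'" using t' by (simp only: sum.delta finite_lessThan) simp
    finally show ?thesis .
  qed
  have side: "(\<Sum>s<K. (rou K ^ s) ^ t' * \<gamma> s) = \<gamma> 0" for t'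
  proof -
    have "(\<Sum>s<K. (rou K ^ s) ^ t' * \<gamma> s) = (\<Sum>s\<in>{0}. (rou K ^ s) ^ t' * \<gamma> s)"
      using K h by (intro sum.mono_neutral_right) (auto simp: \<gamma>_def)
    then show ?thesis by simp
  qed
  have "of_nat K * \<beta> t = of_nat K * \<beta> 0"
    using main[OF t] main[OF K] side by metis
  then show ?thesis using K by simp
qed

lemma D1: "((t::nat) div K) div K ^ e = t div K ^ Suc e"
  by (simp only: power_Suc div_mult2_eq)

lemma D2: "(r0::nat) < K \<Longrightarrow> (K * (t::nat) + r0) div K ^ Suc e = t div K ^ e"
proof -
  assume r: "r0 < K"
  then have "(K * t + r0) div K = t" by simp
  then show ?thesis using D1[of "K * t + r0" K e] by simp
qed

definition inb :: "nat \<Rightarrow> nat \<Rightarrow> nat \<Rightarrow> nat \<Rightarrow> nat \<Rightarrow> bool" where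
  "inb K m j i t \<longleftrightarrow> i < m \<and> t div K ^ (m - i) = j"

definition idx :: "nat \<Rightarrow> nat \<Rightarrow> nat \<Rightarrow> nat \<Rightarrow> nat" where
  "idx K m i t = t div K ^ (m - 1 - i) mod K"

lemma P1: "inb K m j (Suc n) (t div K) \<longleftrightarrow> Suc n < m \<and> inb K m j n t"
proof (cases "Suc n < m")
  case True
  then have "m - n = Suc (m - Suc n)" by simp
  then show ?thesis using True unfolding inb_def by (simp add: D1)
qed (auto simp: inb_def)

lemma P2: "Suc n < m \<Longrightarrow> idx K m (Suc n) (t div K) = idx K m n t"
proof -
  assume "Suc n < m"
  then have "m - 1 - n = Suc (m - 1 - Suc n)" by simp
  then show ?thesis unfolding idx_def by (simp add: D1)
qed

lemma C1: "r0 < K \<Longrightarrow> inb K m j n' (K * t + r0) \<longleftrightarrow> (Suc n' < m \<and> inb K m j (Suc n') t) \<or> (Suc n' = m \<and> t = j)"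
proof (cases "n' < m")
  case True
  assume r: "r0 < K"
  then have "m - n' = Suc (m - Suc n')" using True by simp
  then have "(K * t + r0) div K ^ (m - n') = t div K ^ (m - Suc n')" using D2[OF r] by simp
  then show ?thesis using True unfolding inb_def by (cases "Suc n' = m") auto
qed (auto simp: inb_def)

lemma C2: "r0 < K \<Longrightarrow> Suc n' < m \<Longrightarrow> idx K m n' (K * t + r0) = idx K m (Suc n') t"
proof -
  assume r: "r0 < K" and "Suc n' < m"
  then have "m - 1 - n' = Suc (m - 1 - Suc n')" by simp
  then show ?thesis unfolding idx_def using D2[OF r] by simp
qed

lemma C3: "r0 < K \<Longrightarrow> Suc n' = m \<Longrightarrow> idx K m n' (K * t + r0) = r0"
  unfolding idx_def by auto

lemma adj_set:
  assumes "K > 0"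
  shows "{y. canopy_adj K (n, t) y} = insert (Suc n, t div K) (if n = 0 then {} else (\<lambda>r. (n - 1, K * t + r)) ` {..<K})"
proof -
  have "x = canopy_parent K y \<longleftrightarrow> (n \<noteq> 0 \<and> (\<exists>r<K. y = (n - 1, K * t + r)))" if "x = (n, t)" for x y
  proof -
    obtain a c where y: "y = (a, c)" by fastforce
    have "c div K = t \<longleftrightarrow> (\<exists>r<K. c = K * t + r)"
    proof
      assume "c div K = t"
      then show "\<exists>r<K. c = K * t + r" using assms
        by (intro exI[of _ "c mod K"]) (auto simp: mult.commute)
    next
      assume "\<exists>r<K. c = K * t + r"
      then show "c div K = t" by auto
    qed
    then show ?thesis using that y unfolding canopy_parent_def by auto
  qed
  then show ?thesis unfolding canopy_adj_def canopy_parent_def by auto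
qed

lemma A_eq:
  assumes "K > 0"
  shows "canopy_A K \<psi> (n, t) = \<psi> (Suc n, t div K) + (if n = 0 then 0 else (\<Sum>r<K. \<psi> (n - 1, K * t + r)))"
proof -
  have inj: "inj_on (\<lambda>r. (n - 1, K * t + r)) {..<K}" by (auto simp: inj_on_def)
  have nm: "(Suc n, t div K) \<notin> (if n = 0 then {} else (\<lambda>r. (n - 1, K * t + r)) ` {..<K})" by auto
  have re: "sum \<psi> ((\<lambda>r. (n - 1, K * t + r)) ` {..<K}) = (\<Sum>r<K. \<psi> (n - 1, K * t + r))"
    using sum.reindex[OF inj, of \<psi>] by (simp add: comp_def)
  show ?thesis
  proof (cases "n = 0")
    case True
    then show ?thesis unfolding canopy_A_def adj_set[OF assms] by simp
  next
    case False
    have "canopy_A K \<psi> (n, t) = \<psi> (Suc n, t div K) + sum \<psi> ((\<lambda>r. (n - 1, K * t + r)) ` {..<K})"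
      unfolding canopy_A_def adj_set[OF assms] using False nm by (subst sum.insert) auto
    then show ?thesis using False re by simp
  qed
qed


definition ef :: "nat \<Rightarrow> real \<Rightarrow> nat \<Rightarrow> nat \<Rightarrow> nat \<Rightarrow> real \<Rightarrow> nat \<times> nat \<Rightarrow> complex" where
  "ef K b m j s lam x = (if inb K m j (fst x) (snd x)
     then (rou K ^ s) ^ idx K m (fst x) (snd x) * poly (cP K b (fst x)) (of_real lam) else 0)"

lemma ef_val: "ef K b m j s lam (i, t) = (if inb K m j i t
     then (rou K ^ s) ^ idx K m i t * poly (cP K b i) (of_real lam) else 0)"
  by (simp add: ef_def)

lemma B_eq: "canopy_B b \<psi> (n, t) = (if n = 0 then complex_of_real b * \<psi> (n, t) else 0)"
  by (simp add: canopy_B_def canopy_boundary_def)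

lemma ef_eigen:
  assumes K: "K > 0" and s: "0 < s" "s < K" and m: "0 < m"
    and root: "poly (cP K b m) (of_real lam) = 0"
  shows "canopy_H K b (ef K b m j s lam) x = of_real lam * ef K b m j s lam x"
proof -
  obtain n t where x: "x = (n, t)" by fastforce
  let ?f = "ef K b m j s lam"
  let ?p = "\<lambda>i. poly (cP K b i) (of_real lam)"
  let ?L = "complex_of_real lam"
  have H: "canopy_H K b ?f (n, t) = ?f (Suc n, t div K) + (if n = 0 then 0 else (\<Sum>r<K. ?f (n - 1, K * t + r)))
      + (if n = 0 then complex_of_real b * ?f (n, t) else 0)"
    unfolding canopy_H_def A_eq[OF K] B_eq ..
  consider (A) "inb K m j n t" | (B) "(n, t) = (m, j)" | (C) "\<not> inb K m j n t" "(n, t) \<noteq> (m, j)"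
    by blast
  then have "canopy_H K b ?f (n, t) = ?L * ?f (n, t)"
  proof cases
    case A
    define \<rho> where "\<rho> = (rou K ^ s) ^ idx K m n t"
    have nm: "n < m" using A by (simp add: inb_def)
    have fx: "?f (n, t) = \<rho> * ?p n" using A by (simp add: ef_val \<rho>_def)
    have par: "?f (Suc n, t div K) = (if Suc n < m then \<rho> * ?p (Suc n) else 0)"
      using A by (auto simp: ef_val P1 P2 \<rho>_def)
    show ?thesis
    proof (cases n)
      case 0
      have "canopy_H K b ?f (n, t) = (if Suc 0 < m then \<rho> * ?p 1 else 0) + complex_of_real b * \<rho>"
        using H par fx 0 by simp
      also have "\<dots> = ?L * (\<rho> * ?p 0)"
      proof (cases "Suc 0 < m")
        case True then show ?thesis by (simp add: algebra_simps)
      next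
        case False
        then have "m = 1" using m by simp
        then have "?L = complex_of_real b" using root by simp
        then show ?thesis using False by simp
      qed
      finally show ?thesis using fx 0 by simp
    next
      case (Suc n')
      have ch: "?f (n', K * t + r) = \<rho> * ?p n'" if r: "r < K" for r
      proof -
        have "inb K m j n' (K * t + r)" using C1[OF r, of m j n' t] A Suc nm by simp
        moreover have "idx K m n' (K * t + r) = idx K m n t" using C2[OF r, of n' m t] Suc nm by simp
        ultimately show ?thesis by (simp add: ef_val \<rho>_def)
      qed
      have "canopy_H K b ?f (n, t) = (if Suc n < m then \<rho> * ?p (Suc n) else 0) + (\<Sum>r<K. \<rho> * ?p n')"
        using H par Suc ch by simp
      also have "\<dots> = (if Suc n < m then \<rho> * ?p (Suc n) else 0) + of_nat K * \<rho> * ?p n'"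
        by simp
      also have "\<dots> = ?L * (\<rho> * ?p n)"
      proof (cases "Suc n < m")
        case True
        have "?p (Suc (Suc n')) = ?L * ?p (Suc n') - of_nat K * ?p n'" by (rule cP_rec)
        then show ?thesis using True Suc by (simp add: algebra_simps)
      next
        case False
        then have "Suc (Suc n') = m" using nm Suc by simp
        then have "?L * ?p (Suc n') - of_nat K * ?p n' = 0" using root cP_rec[of K b n' ?L] by simp
        then show ?thesis using False Suc by (simp add: algebra_simps)
      qed
      finally show ?thesis using fx by simp
    qed
  next
    case B
    then have nt: "n = m" "t = j" by auto
    obtain n' where n': "m = Suc n'" using m by (cases m) auto
    have f0: "?f (n, t) = 0" using nt by (simp add: ef_val inb_def)
    have par: "?f (Suc n, t div K) = 0" using nt by (simp add: ef_val P1)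
    have ch: "?f (n', K * t + r) = (rou K ^ s) ^ r * ?p n'" if r: "r < K" for r
    proof -
      have "inb K m j n' (K * t + r)" using C1[OF r, of m j n' t] nt n' by simp
      moreover have "idx K m n' (K * t + r) = r" using C3[OF r, of n' m t] n' by simp
      ultimately show ?thesis by (simp add: ef_val)
    qed
    have "canopy_H K b ?f (n, t) = (\<Sum>r<K. (rou K ^ s) ^ r * ?p n')"
      using H par ch nt n' by simp
    also have "\<dots> = (\<Sum>r<K. (rou K ^ s) ^ r) * ?p n'" by (simp add: sum_distrib_right)
    also have "\<dots> = 0" using rou_sum0[OF K s] by simp
    finally show ?thesis using f0 by simp
  next
    case C
    have f0: "?f (n, t) = 0" using C by (simp add: ef_val)
    have par: "?f (Suc n, t div K) = 0" using C by (simp add: ef_val P1)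
    have ch: "?f (n - 1, K * t + r) = 0" if r: "r < K" "n \<noteq> 0" for r
    proof -
      obtain n' where n': "n = Suc n'" using r(2) by (cases n) auto
      have "\<not> inb K m j n' (K * t + r)" using C1[OF r(1), of m j n' t] C n' by auto
      then show ?thesis using n' by (simp add: ef_val)
    qed
    have "canopy_H K b ?f (n, t) = 0" using H par ch f0 by (cases "n = 0") auto
    then show ?thesis using f0 by simp
  qed
  then show ?thesis using x by simp
qed

definition blk :: "nat \<Rightarrow> nat \<Rightarrow> nat \<Rightarrow> nat set" where
  "blk K e c = {t. t div K ^ e = c}"

lemma div_iff_ivl:
  assumes "(n::nat) > 0"
  shows "t div n = c \<longleftrightarrow> c * n \<le> t \<and> t < c * n + n"
proof
  assume "t div n = c"
  then have "t = c * n + t mod n" by (metis div_mult_mod_eq)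
  moreover have "t mod n < n" using assms by simp
  ultimately show "c * n \<le> t \<and> t < c * n + n" by linarith
next
  assume "c * n \<le> t \<and> t < c * n + n"
  then show "t div n = c" by (intro div_nat_eqI) (auto simp: mult.commute)
qed

lemma blk_ivl: "K > 0 \<Longrightarrow> blk K e c = {c * K ^ e ..< c * K ^ e + K ^ e}"
  unfolding blk_def using div_iff_ivl[of "K ^ e"] by auto

lemma finite_blk[simp]: "K > 0 \<Longrightarrow> finite (blk K e c)"
  by (simp add: blk_ivl)

lemma card_blk: "K > 0 \<Longrightarrow> card (blk K e c) = K ^ e"
  by (simp add: blk_ivl)

lemma div_add_pow: "(t::nat) div K ^ (f + g) = (t div K ^ f) div K ^ g"
  by (simp add: power_add div_mult2_eq)

lemma blk_group:
  assumes K: "K > 0" and fe: "f \<le> e"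
  shows "(\<Sum>t\<in>blk K e c. h t) = (\<Sum>y\<in>blk K (e - f) c. \<Sum>t\<in>blk K f y. h t)"
proof -
  have ediv: "t div K ^ e = (t div K ^ f) div K ^ (e - f)" for t
    using div_add_pow[of t K f "e - f"] fe by simp
  have sub: "(\<lambda>t. t div K ^ f) ` blk K e c \<subseteq> blk K (e - f) c"
    unfolding blk_def using ediv by auto
  have "(\<Sum>t\<in>blk K e c. h t) = (\<Sum>y\<in>blk K (e - f) c. sum h {t. t \<in> blk K e c \<and> t div K ^ f = y})"
    using sum.group[OF finite_blk[OF K] finite_blk[OF K] sub, of h] by simp
  also have "\<dots> = (\<Sum>y\<in>blk K (e - f) c. \<Sum>t\<in>blk K f y. h t)"
  proof -
    have set_eq: "{t. t \<in> blk K e c \<and> t div K ^ f = y} = blk K f y" if y: "y \<in> blk K (e - f) c" for y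
      using y ediv unfolding blk_def by auto
    show ?thesis by (intro sum.cong refl) (simp add: set_eq)
  qed
  finally show ?thesis .
qed

lemma blk1: "K > 0 \<Longrightarrow> blk K 1 j = (\<lambda>r. K * j + r) ` {..<K}"
proof -
  assume K: "K > 0"
  have "y div K = j \<longleftrightarrow> (\<exists>r<K. y = K * j + r)" for y
  proof
    assume "y div K = j"
    then show "\<exists>r<K. y = K * j + r" using K
      by (intro exI[of _ "y mod K"]) (auto simp: mult.commute)
  next
    assume "\<exists>r<K. y = K * j + r"
    then show "y div K = j" by auto
  qed
  then show ?thesis unfolding blk_def by auto
qed

lemma blk_split:
  assumes K: "K > 0"
  shows "(\<Sum>t\<in>blk K (Suc e) j. h t) = (\<Sum>r<K. \<Sum>t\<in>blk K e (K * j + r). h t)"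
proof -
  have "(\<Sum>t\<in>blk K (Suc e) j. h t) = (\<Sum>y\<in>blk K 1 j. \<Sum>t\<in>blk K e y. h t)"
    using blk_group[OF K, where f=e and e="Suc e" and c=j and h=h] by simp
  also have "\<dots> = (\<Sum>r<K. \<Sum>t\<in>blk K e (K * j + r). h t)"
    unfolding blk1[OF K] by (subst sum.reindex) (auto simp: inj_on_def)
  finally show ?thesis .
qed

lemma blk_const:
  assumes K: "K > 0" and h: "\<And>t. t \<in> blk K e c \<Longrightarrow> h t = v"
  shows "(\<Sum>t\<in>blk K e c. h t) = of_nat (K ^ e) * v"
  using h card_blk[OF K, of e c] by simp

lemma Lift:
  assumes "i \<le> l" "l < m" "t \<in> blk K (l - i) c"
  shows "inb K m j i t \<longleftrightarrow> inb K m j l c" "idx K m i t = idx K m l c"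
proof -
  have c: "t div K ^ (l - i) = c" using assms(3) by (simp add: blk_def)
  have "m - i = (l - i) + (m - l)" using assms by simp
  then have "t div K ^ (m - i) = c div K ^ (m - l)" using div_add_pow[of t K "l - i" "m - l"] c by simp
  then show "inb K m j i t \<longleftrightarrow> inb K m j l c" using assms unfolding inb_def by auto
  have "m - 1 - i = (l - i) + (m - 1 - l)" using assms by simp
  then have "t div K ^ (m - 1 - i) = c div K ^ (m - 1 - l)" using div_add_pow[of t K "l - i" "m - 1 - l"] c by simp
  then show "idx K m i t = idx K m l c" unfolding idx_def by simp
qed

lemma EV:
  assumes K: "K > 0" and i: "i < m" and r: "r < K" and t: "t \<in> blk K (m - 1 - i) (K * j + r)"
  shows "ef K b m j s lam (i, t) = (rou K ^ s) ^ r * poly (cP K b i) (of_real lam)"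
proof -
  obtain n' where n': "m = Suc n'" using i by (cases m) auto
  have l: "i \<le> n'" "n' < m" "t \<in> blk K (n' - i) (K * j + r)" using i t n' by auto
  have "inb K m j n' (K * j + r)" using C1[OF r, of m j n' j] n' by simp
  then have "inb K m j i t" using Lift(1)[OF l] by simp
  moreover have "idx K m i t = r" using Lift(2)[OF l] C3[OF r, of n' m j] n' by simp
  ultimately show ?thesis by (simp add: ef_val)
qed

lemma ef_supp: "ef K b m j s lam (i, t) \<noteq> 0 \<Longrightarrow> i < m \<and> t \<in> blk K (m - i) j"
  by (auto simp: ef_val inb_def blk_def split: if_splits)

definition supp :: "nat \<Rightarrow> nat \<Rightarrow> nat \<Rightarrow> (nat \<times> nat) set" where
  "supp K m j = Sigma {..<m} (\<lambda>i. blk K (m - i) j)"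

lemma finite_supp: "K > 0 \<Longrightarrow> finite (supp K m j)"
  unfolding supp_def by auto

lemma ef_supp': "x \<notin> supp K m j \<Longrightarrow> ef K b m j s lam x = 0"
  using ef_supp[of K b m j s lam "fst x" "snd x"] unfolding supp_def by (cases x) auto

definition BS :: "nat \<Rightarrow> (nat \<times> nat \<Rightarrow> complex) \<Rightarrow> nat \<Rightarrow> nat \<Rightarrow> nat \<Rightarrow> complex" where
  "BS K \<psi> i e c = (\<Sum>t\<in>blk K e c. \<psi> (i, t))"

lemma KF:
  assumes K: "K > 0"
  shows "(\<Sum>x\<in>supp K m j. cnj (ef K b m j s lam x) * \<psi> x)
    = (\<Sum>i<m. poly (cP K b i) (of_real lam) * (\<Sum>r<K. cnj ((rou K ^ s) ^ r) * BS K \<psi> i (m - 1 - i) (K * j + r)))"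
proof -
  have "(\<Sum>x\<in>supp K m j. cnj (ef K b m j s lam x) * \<psi> x)
      = (\<Sum>i<m. \<Sum>t\<in>blk K (m - i) j. cnj (ef K b m j s lam (i, t)) * \<psi> (i, t))"
    unfolding supp_def by (subst sum.Sigma) (auto simp: K)
  also have "\<dots> = (\<Sum>i<m. poly (cP K b i) (of_real lam) * (\<Sum>r<K. cnj ((rou K ^ s) ^ r) * BS K \<psi> i (m - 1 - i) (K * j + r)))"
  proof (intro sum.cong refl)
    fix i assume "i \<in> {..<m}"
    then have i: "i < m" by simp
    then have e: "m - i = Suc (m - 1 - i)" by simp
    have re: "cnj (poly (cP K b i) (of_real lam)) = poly (cP K b i) (of_real lam)"
      using cP_cnj[of K b i "of_real lam"] by simp
    have "(\<Sum>t\<in>blk K (m - i) j. cnj (ef K b m j s lam (i, t)) * \<psi> (i, t))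
        = (\<Sum>r<K. \<Sum>t\<in>blk K (m - 1 - i) (K * j + r). cnj (ef K b m j s lam (i, t)) * \<psi> (i, t))"
      unfolding e by (rule blk_split[OF K])
    also have "\<dots> = (\<Sum>r<K. \<Sum>t\<in>blk K (m - 1 - i) (K * j + r). poly (cP K b i) (of_real lam) * (cnj ((rou K ^ s) ^ r) * \<psi> (i, t)))"
      by (intro sum.cong refl) (simp add: EV[OF K i] re)
    also have "\<dots> = poly (cP K b i) (of_real lam) * (\<Sum>r<K. cnj ((rou K ^ s) ^ r) * BS K \<psi> i (m - 1 - i) (K * j + r))"
      by (simp add: BS_def sum_distrib_left)
    finally show "(\<Sum>t\<in>blk K (m - i) j. cnj (ef K b m j s lam (i, t)) * \<psi> (i, t)) = \<dots>" .
  qed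
  finally show ?thesis .
qed

lemma Z:
  assumes K: "K > 0" and i: "i < m'" and s': "0 < s'" "s' < K"
  shows "BS K (ef K b m' j' s' mu) i (m' - i) j' = 0"
proof -
  have e: "m' - i = Suc (m' - 1 - i)" using i by simp
  have "BS K (ef K b m' j' s' mu) i (m' - i) j'
      = (\<Sum>r<K. \<Sum>t\<in>blk K (m' - 1 - i) (K * j' + r). ef K b m' j' s' mu (i, t))"
    unfolding BS_def e by (rule blk_split[OF K])
  also have "\<dots> = (\<Sum>r<K. of_nat (K ^ (m' - 1 - i)) * ((rou K ^ s') ^ r * poly (cP K b i) (of_real mu)))"
    by (intro sum.cong refl blk_const[OF K]) (simp add: EV[OF K i])
  also have "\<dots> = of_nat (K ^ (m' - 1 - i)) * poly (cP K b i) (of_real mu) * (\<Sum>r<K. (rou K ^ s') ^ r)"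
    by (simp add: sum_distrib_left algebra_simps)
  also have "\<dots> = 0" using rou_sum0[OF K s'] by simp
  finally show ?thesis .
qed

lemma BS_big:
  assumes K: "K > 0" and mm: "m' < m" and s': "0 < s'" "s' < K"
  shows "BS K (ef K b m' j' s' mu) i (m - 1 - i) c = 0"
proof (cases "i < m'")
  case False
  then have "ef K b m' j' s' mu (i, t) = 0" for t using ef_supp by fastforce
  then show ?thesis by (simp add: BS_def)
next
  case True
  have fe: "m' - i \<le> m - 1 - i" using mm True by simp
  have "BS K (ef K b m' j' s' mu) i (m - 1 - i) c
     = (\<Sum>y\<in>blk K (m - 1 - i - (m' - i)) c. \<Sum>t\<in>blk K (m' - i) y. ef K b m' j' s' mu (i, t))"
    unfolding BS_def by (rule blk_group[OF K fe])
  also have "\<dots> = 0"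
  proof (rule sum.neutral, rule ballI)
    fix y assume "y \<in> blk K (m - 1 - i - (m' - i)) c"
    show "(\<Sum>t\<in>blk K (m' - i) y. ef K b m' j' s' mu (i, t)) = 0"
    proof (cases "y = j'")
      case True
      then show ?thesis using Z[OF K \<open>i < m'\<close> s'] by (simp add: BS_def)
    next
      case False
      have "ef K b m' j' s' mu (i, t) = 0" if "t \<in> blk K (m' - i) y" for t
        using ef_supp that False by (fastforce simp: blk_def)
      then show ?thesis by simp
    qed
  qed
  finally show ?thesis .
qed

lemma BS_small:
  assumes K: "K > 0" and i: "i < m" and mm: "m \<le> m'" and r: "r < K"
  shows "BS K (ef K b m' j' s' mu) i (m - 1 - i) (K * j + r)
    = of_nat (K ^ (m - 1 - i)) * (if inb K m' j' (m - 1) (K * j + r)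
        then (rou K ^ s') ^ idx K m' (m - 1) (K * j + r) * poly (cP K b i) (of_real mu) else 0)"
  unfolding BS_def
proof (rule blk_const[OF K])
  fix t assume t: "t \<in> blk K (m - 1 - i) (K * j + r)"
  have l: "i \<le> m - 1" "m - 1 < m'" using i mm by auto
  show "ef K b m' j' s' mu (i, t) = (if inb K m' j' (m - 1) (K * j + r)
        then (rou K ^ s') ^ idx K m' (m - 1) (K * j + r) * poly (cP K b i) (of_real mu) else 0)"
    using Lift(1)[OF l t, of j'] Lift(2)[OF l t] by (simp add: ef_val)
qed

definition NN :: "nat \<Rightarrow> real \<Rightarrow> nat \<Rightarrow> real \<Rightarrow> real" where
  "NN K b m lam = real K * (\<Sum>i<m. real K ^ (m - 1 - i) * (cmod (poly (cP K b i) (of_real lam)))^2)"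

lemma NN_pos: "K > 0 \<Longrightarrow> 0 < m \<Longrightarrow> NN K b m lam > 0"
proof -
  assume K: "K > 0" and m: "0 < m"
  obtain n where n: "m = Suc n" using m by (cases m) auto
  have "(\<Sum>i<m. real K ^ (m - 1 - i) * (cmod (poly (cP K b i) (of_real lam)))^2)
      = real K ^ n + (\<Sum>i<n. real K ^ (n - Suc i) * (cmod (poly (cP K b (Suc i)) (of_real lam)))^2)"
    unfolding n by (subst sum.lessThan_Suc_shift) simp
  also have "\<dots> > 0" using K by (intro add_pos_nonneg sum_nonneg) auto
  finally show ?thesis using K unfolding NN_def by simp
qed

lemma IP:
  assumes K: "K > 0" and s: "0 < s" "s < K" and s': "0 < s'" "s' < K"
    and m: "0 < m" and m': "0 < m'"
    and rl: "poly (cP K b m) (of_real lam) = 0" and rm: "poly (cP K b m') (of_real mu) = 0"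
  shows "(\<Sum>x\<in>supp K m j. cnj (ef K b m j s lam x) * ef K b m' j' s' mu x)
    = (if (m, j, s, lam) = (m', j', s', mu) then complex_of_real (NN K b m lam) else 0)"
proof -
  let ?p = "\<lambda>i. poly (cP K b i) (of_real lam)"
  let ?q = "\<lambda>i. poly (cP K b i) (of_real mu)"
  have KF': "(\<Sum>x\<in>supp K m j. cnj (ef K b m j s lam x) * ef K b m' j' s' mu x)
    = (\<Sum>i<m. ?p i * (\<Sum>r<K. cnj ((rou K ^ s) ^ r) * BS K (ef K b m' j' s' mu) i (m - 1 - i) (K * j + r)))"
    by (rule KF[OF K])
  obtain n where n: "m = Suc n" using m by (cases m) auto
  consider (gt) "m' < m" | (lt) "m < m'" | (eq) "m = m'" by linarith
  then show ?thesis
  proof cases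
    case gt
    then show ?thesis unfolding KF' using BS_big[OF K gt s'] by simp
  next
    case lt
    have "BS K (ef K b m' j' s' mu) i (m - 1 - i) (K * j + r) = BS K (ef K b m' j' s' mu) i (m - 1 - i) (K * j)"
      if i: "i < m" and r: "r < K" for i r
    proof -
      have c1: "inb K m' j' (m - 1) (K * j + r) \<longleftrightarrow> inb K m' j' m j"
        using C1[OF r, of m' j' n j] C1[OF K, of m' j' n j] n lt by auto
      have c2: "idx K m' (m - 1) (K * j + r) = idx K m' m j"
        using C2[OF r, of n m' j] n lt by simp
      have c1': "inb K m' j' (m - 1) (K * j + 0) \<longleftrightarrow> inb K m' j' m j"
        using C1[OF K, of m' j' n j] n lt by auto
      have c2': "idx K m' (m - 1) (K * j + 0) = idx K m' m j"
        using C2[OF K, of n m' j] n lt by simp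
      show ?thesis using BS_small[OF K i _ r, of m' b j' s' mu j] BS_small[OF K i _ K, of m' b j' s' mu j] lt c1 c2 c1' c2'
        by simp
    qed
    then have "(\<Sum>r<K. cnj ((rou K ^ s) ^ r) * BS K (ef K b m' j' s' mu) i (m - 1 - i) (K * j + r))
        = cnj (\<Sum>r<K. (rou K ^ s) ^ r) * BS K (ef K b m' j' s' mu) i (m - 1 - i) (K * j)" if "i < m" for i
      using that by (simp add: sum_distrib_right)
    then show ?thesis unfolding KF' using rou_sum0[OF K s] lt by simp
  next
    case eq
    have bs: "BS K (ef K b m' j' s' mu) i (m - 1 - i) (K * j + r)
        = (if j = j' then of_nat (K ^ (m - 1 - i)) * ((rou K ^ s') ^ r * ?q i) else 0)"
      if i: "i < m" and r: "r < K" for i r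
    proof -
      have c1: "inb K m' j' (m - 1) (K * j + r) \<longleftrightarrow> j = j'"
        using C1[OF r, of m' j' n j] n eq by auto
      have c2: "idx K m' (m - 1) (K * j + r) = r"
        using C3[OF r, of n m' j] n eq by simp
      have "BS K (ef K b m' j' s' mu) i (m - 1 - i) (K * j + r) = of_nat (K ^ (m - 1 - i)) * (if inb K m' j' (m - 1) (K * j + r)
        then (rou K ^ s') ^ idx K m' (m - 1) (K * j + r) * ?q i else 0)"
        by (rule BS_small[OF K i _ r]) (simp add: eq)
      then show ?thesis unfolding c1 c2 by simp
    qed
    show ?thesis
    proof (cases "j = j'")
      case False
      then show ?thesis unfolding KF' using bs by simp
    next
      case True
      have "(\<Sum>x\<in>supp K m j. cnj (ef K b m j s lam x) * ef K b m' j' s' mu x)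
          = (\<Sum>i<m. ?p i * (\<Sum>r<K. cnj ((rou K ^ s) ^ r) * (of_nat (K ^ (m - 1 - i)) * ((rou K ^ s') ^ r * ?q i))))"
        unfolding KF' using bs True by (intro sum.cong refl) simp
      also have "\<dots> = (\<Sum>i<m. of_nat K ^ (m - 1 - i) * ?p i * ?q i) * (\<Sum>r<K. cnj ((rou K ^ s) ^ r) * (rou K ^ s') ^ r)"
        by (simp add: sum_distrib_left sum_distrib_right algebra_simps)
      also have "\<dots> = (\<Sum>i<m. of_nat K ^ (m - 1 - i) * ?p i * ?q i) * (if s = s' then of_nat K else 0)"
        using rou_orth[OF K s(2) s'(2)] by simp
      finally have main: "(\<Sum>x\<in>supp K m j. cnj (ef K b m j s lam x) * ef K b m' j' s' mu x)
          = (\<Sum>i<m. of_nat K ^ (m - 1 - i) * ?p i * ?q i) * (if s = s' then of_nat K else 0)" .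
      show ?thesis
      proof (cases "s = s' \<and> lam = mu")
        case False
        show ?thesis
        proof (cases "s = s'")
          case False then show ?thesis unfolding main by simp
        next
          case True
          then have lm: "complex_of_real lam \<noteq> complex_of_real mu" using \<open>\<not> (s = s' \<and> lam = mu)\<close> by simp
          have "(\<Sum>i<Suc n. of_nat K ^ (n - i) * ?p i * ?q i) = 0"
            by (rule cP_orth[OF K _ _ lm]) (use rl rm n eq in simp_all)
          then show ?thesis unfolding main using n \<open>\<not> (s = s' \<and> lam = mu)\<close> by auto
        qed
      next
        case True
        then have st: "s = s'" "lam = mu" by auto
        have sq: "(complex_of_real (cmod (?p i)))^2 = ?p i * ?p i" for i
        proof -
          have "cnj (?p i) = ?p i" using cP_cnj[of K b i "of_real lam"] by simp
          then show ?thesis using complex_norm_square[of "?p i"] by simp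
        qed
        have "complex_of_real (NN K b m lam) = of_nat K * (\<Sum>i<m. of_nat K ^ (m - 1 - i) * (?p i * ?p i))"
          unfolding NN_def by (simp add: sq)
        then have "(\<Sum>i<m. of_nat K ^ (m - 1 - i) * ?p i * ?q i) * of_nat K = complex_of_real (NN K b m lam)"
          unfolding st by (simp add: mult_ac)
        then show ?thesis unfolding main using st eq \<open>j = j'\<close> by simp
      qed
    qed
  qed
qed

lemma fin_l2:
  assumes "finite F" "\<And>x. x \<notin> F \<Longrightarrow> \<phi> x = 0"
  shows "\<phi> \<in> l2"
proof -
  have "(\<lambda>x. (cmod (\<phi> x))^2) summable_on F" using assms(1) by simp
  then have "(\<lambda>x. (cmod (\<phi> x))^2) summable_on UNIV"
    by (rule summable_on_cong_neutral[THEN iffD1, rotated -1]) (use assms(2) in auto)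
  then show ?thesis by (simp add: l2_def)
qed

lemma fin_inner:
  assumes "finite F" "\<And>x. x \<notin> F \<Longrightarrow> \<phi> x = 0"
  shows "l2_inner \<phi> \<psi> = (\<Sum>x\<in>F. cnj (\<phi> x) * \<psi> x)"
proof -
  have "l2_inner \<phi> \<psi> = infsum (\<lambda>x. cnj (\<phi> x) * \<psi> x) F"
    unfolding l2_inner_def by (rule infsum_cong_neutral) (use assms(2) in auto)
  then show ?thesis using assms(1) by simp
qed

lemma l2_const_zero:
  fixes \<psi> :: "'a \<times> nat \<Rightarrow> complex"
  assumes "\<psi> \<in> l2" "\<And>t. \<psi> (i, t) = c"
  shows "c = 0"
proof (rule ccontr)
  assume c: "c \<noteq> 0"
  let ?g = "\<lambda>x. (cmod (\<psi> x))^2"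
  have sm: "?g summable_on UNIV" using assms(1) by (simp add: l2_def)
  have bound: "real n * (cmod c)^2 \<le> infsum ?g UNIV" for n
  proof -
    have "infsum ?g ({i} \<times> {..<n}) \<le> infsum ?g UNIV"
      by (rule infsum_mono_neutral) (use sm in auto)
    moreover have "infsum ?g ({i} \<times> {..<n}) = real n * (cmod c)^2"
    proof -
      have "{i} \<times> {..<n} = (\<lambda>t. (i, t)) ` {..<n}" by auto
      then have "infsum ?g ({i} \<times> {..<n}) = (\<Sum>t<n. ?g (i, t))"
        by (simp add: sum.reindex inj_on_def)
      then show ?thesis using assms(2) by simp
    qed
    ultimately show ?thesis by simp
  qed
  have "0 < (cmod c)^2" using c by simp
  then obtain n where "infsum ?g UNIV < real n * (cmod c)^2"
    using reals_Archimedean3 by blast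
  then show False using bound[of n] by simp
qed

lemma H_scale: "canopy_H K b (\<lambda>x. k * f x) = (\<lambda>x. k * canopy_H K b f x)"
  by (rule ext) (simp add: canopy_H_def canopy_A_def canopy_B_def sum_distrib_left algebra_simps)

definition en :: "nat \<Rightarrow> real \<Rightarrow> nat \<times> nat \<times> nat \<times> real \<Rightarrow> nat \<times> nat \<Rightarrow> complex" where
  "en K b a = (case a of (m, j, s, lam) \<Rightarrow> (\<lambda>x. complex_of_real (1 / sqrt (NN K b m lam)) * ef K b m j s lam x))"

definition Idx :: "nat \<Rightarrow> real \<Rightarrow> (nat \<times> nat \<times> nat \<times> real) set" where
  "Idx K b = {(m, j, s, lam). 0 < m \<and> 0 < s \<and> s < K \<and> poly (cP K b m) (of_real lam) = 0}"

lemma en_eq: "en K b (m, j, s, lam) x = complex_of_real (1 / sqrt (NN K b m lam)) * ef K b m j s lam x"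
  by (simp only: en_def prod.case)

lemma en_supp: "x \<notin> supp K m j \<Longrightarrow> en K b (m, j, s, lam) x = 0"
  unfolding en_eq by (simp add: ef_supp')

lemma inner_en:
  assumes K: "K > 0" and a: "a \<in> Idx K b" and a': "a' \<in> Idx K b"
  shows "l2_inner (en K b a) (en K b a') = (if a = a' then 1 else 0)"
proof -
  obtain m j s lam where aa: "a = (m, j, s, lam)" by (cases a) auto
  obtain m' j' s' mu where aa': "a' = (m', j', s', mu)" by (cases a') auto
  have h: "0 < m" "0 < s" "s < K" "poly (cP K b m) (of_real lam) = 0"
    "0 < m'" "0 < s'" "s' < K" "poly (cP K b m') (of_real mu) = 0"
    using a a' aa aa' by (auto simp: Idx_def)
  define c where "c = complex_of_real (1 / sqrt (NN K b m lam))"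
  define c' where "c' = complex_of_real (1 / sqrt (NN K b m' mu))"
  have "l2_inner (en K b a) (en K b a') = (\<Sum>x\<in>supp K m j. cnj (en K b a x) * en K b a' x)"
    unfolding aa by (rule fin_inner[OF finite_supp[OF K]]) (simp add: en_supp)
  also have "\<dots> = (\<Sum>x\<in>supp K m j. cnj (c * ef K b m j s lam x) * (c' * ef K b m' j' s' mu x))"
    unfolding aa aa' en_eq c_def[symmetric] c'_def[symmetric] ..
  also have "\<dots> = cnj c * c' * (\<Sum>x\<in>supp K m j. cnj (ef K b m j s lam x) * ef K b m' j' s' mu x)"
    by (simp add: sum_distrib_left algebra_simps)
  also have "\<dots> = cnj c * c' * (if (m, j, s, lam) = (m', j', s', mu) then complex_of_real (NN K b m lam) else 0)"
    using IP[OF K h(2,3) h(6,7) h(1) h(5) h(4) h(8)] by simp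
  also have "\<dots> = (if a = a' then 1 else 0)"
  proof (cases "a = a'")
    case True
    then have "c' = c" using aa aa' c_def c'_def by simp
    moreover have pos: "NN K b m lam > 0" by (rule NN_pos[OF K h(1)])
    have sq: "sqrt (NN K b m lam) * sqrt (NN K b m lam) = NN K b m lam" using pos by simp
    have r: "(1 / sqrt (NN K b m lam)) * (1 / sqrt (NN K b m lam)) * NN K b m lam = 1"
      using pos sq by (simp add: field_simps)
    have "cnj c * c * complex_of_real (NN K b m lam) = complex_of_real ((1 / sqrt (NN K b m lam)) * (1 / sqrt (NN K b m lam)) * NN K b m lam)"
      unfolding c_def by (simp only: complex_cnj_complex_of_real of_real_mult)
    then have "cnj c * c' * complex_of_real (NN K b m lam) = 1" using r \<open>c' = c\<close> by simp
    then show ?thesis using True aa aa' by simp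
  next
    case False
    then have "(m, j, s, lam) \<noteq> (m', j', s', mu)" using aa aa' by simp
    then show ?thesis using False by (simp only: if_False) simp
  qed
  finally show ?thesis .
qed

lemma en_l2: "K > 0 \<Longrightarrow> en K b (m, j, s, lam) \<in> l2"
  by (rule fin_l2[OF finite_supp[of K m j]]) (auto simp: en_supp)

lemma en_eigen:
  assumes K: "K > 0" and a: "a \<in> Idx K b"
  shows "is_eigenfunction (canopy_H K b) (en K b a)"
proof -
  obtain m j s lam where aa: "a = (m, j, s, lam)" by (cases a) auto
  have h: "0 < m" "0 < s" "s < K" "poly (cP K b m) (of_real lam) = 0"
    using a aa by (auto simp: Idx_def)
  have nz: "en K b a \<noteq> (\<lambda>_. 0)"
  proof
    assume "en K b a = (\<lambda>_. 0)"
    then have "l2_inner (en K b a) (en K b a) = 0" by (simp add: l2_inner_def)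
    then show False using inner_en[OF K a a] by simp
  qed
  define k where "k = complex_of_real (1 / sqrt (NN K b m lam))"
  have e: "en K b a = (\<lambda>x. k * ef K b m j s lam x)"
    unfolding aa en_eq k_def ..
  have "canopy_H K b (en K b a) = (\<lambda>x. k * canopy_H K b (ef K b m j s lam) x)"
    unfolding e by (rule H_scale)
  also have "\<dots> = (\<lambda>x. k * (complex_of_real lam * ef K b m j s lam x))"
    using ef_eigen[OF K h(2,3) h(1) h(4)] by simp
  also have "\<dots> = (\<lambda>x. complex_of_real lam * en K b a x)"
    unfolding e by (simp add: algebra_simps)
  finally have "canopy_H K b (en K b a) = (\<lambda>x. complex_of_real lam * en K b a x)" .
  then show ?thesis unfolding is_eigenfunction_def using en_l2[OF K] aa nz by blast
qed

lemma ef_inner0: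
  assumes K: "K > 0" and h: "\<forall>a\<in>Idx K b. l2_inner (en K b a) \<psi> = 0"
    and a: "0 < m" "0 < s" "s < K" "poly (cP K b m) (of_real lam) = 0"
  shows "(\<Sum>x\<in>supp K m j. cnj (ef K b m j s lam x) * \<psi> x) = 0"
proof -
  define k where "k = complex_of_real (1 / sqrt (NN K b m lam))"
  have k0: "k \<noteq> 0" using NN_pos[OF K a(1), of b lam] unfolding k_def by simp
  have "(m, j, s, lam) \<in> Idx K b" using a by (simp add: Idx_def)
  then have "0 = l2_inner (en K b (m, j, s, lam)) \<psi>" using h by simp
  also have "\<dots> = (\<Sum>x\<in>supp K m j. cnj (en K b (m, j, s, lam) x) * \<psi> x)"
    by (rule fin_inner[OF finite_supp[OF K]]) (simp add: en_supp)
  also have "\<dots> = cnj k * (\<Sum>x\<in>supp K m j. cnj (ef K b m j s lam x) * \<psi> x)"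
    unfolding en_eq k_def[symmetric] by (simp add: sum_distrib_left algebra_simps)
  finally show ?thesis using k0 by simp
qed

lemma BSeq:
  assumes K: "K > 0" and h: "\<forall>a\<in>Idx K b. l2_inner (en K b a) \<psi> = 0" and r: "r < K"
  shows "BS K \<psi> i e (K * j + r) = BS K \<psi> i e (K * j)"
proof -
  define m where "m = Suc (i + e)"
  have m0: "0 < m" and im: "i < m" and em: "m - 1 - i = e" by (auto simp: m_def)
  have W0: "(\<Sum>r<K. cnj ((rou K ^ s) ^ r) * BS K \<psi> i e (K * j + r)) = 0" if s: "0 < s" "s < K" for s
  proof -
    have "\<forall>i'<m. (\<Sum>r<K. cnj ((rou K ^ s) ^ r) * BS K \<psi> i' (m - 1 - i') (K * j + r)) = 0"
    proof (rule cP_complete[OF K])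
      fix lam :: real assume root: "poly (cP K b m) (of_real lam) = 0"
      have "(\<Sum>x\<in>supp K m j. cnj (ef K b m j s lam x) * \<psi> x) = 0"
        by (rule ef_inner0[OF K h m0 s root])
      then show "(\<Sum>i'<m. poly (cP K b i') (of_real lam) * (\<Sum>r<K. cnj ((rou K ^ s) ^ r) * BS K \<psi> i' (m - 1 - i') (K * j + r))) = 0"
        unfolding KF[OF K] .
    qed
    then show ?thesis using im em by auto
  qed
  have "(\<lambda>r. BS K \<psi> i e (K * j + r)) r = (\<lambda>r. BS K \<psi> i e (K * j + r)) 0"
    by (rule rou_inv[OF K W0 r])
  then show ?thesis by simp
qed

lemma layer_const:
  assumes K: "K > 0"
    and eq: "\<And>e j r. r < K \<Longrightarrow> BS K \<psi> i e (K * j + r) = BS K \<psi> i e (K * j)"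
  shows "t div K ^ d = t' div K ^ d \<Longrightarrow> \<psi> (i, t) = \<psi> (i, t')"
proof (induction d arbitrary: t t')
  case 0
  then show ?case by simp
next
  case (Suc d)
  have bs: "BS K \<psi> i d y = of_nat (K ^ d) * \<psi> (i, y * K ^ d)" for y
    unfolding BS_def
  proof (rule blk_const[OF K])
    fix u assume "u \<in> blk K d y"
    then have "u div K ^ d = (y * K ^ d) div K ^ d" using K by (simp add: blk_def)
    then show "\<psi> (i, u) = \<psi> (i, y * K ^ d)" by (rule Suc.IH)
  qed
  define c where "c = t div K ^ d"
  define c' where "c' = t' div K ^ d"
  have dd: "x div K ^ d div K = x div K ^ Suc d" for x :: nat by (simp only: power_Suc2 div_mult2_eq)
  have q: "c div K = c' div K" using Suc.prems unfolding c_def c'_def dd .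
  have cc: "c = K * (c div K) + c mod K" "c' = K * (c' div K) + c' mod K" by simp_all
  have "BS K \<psi> i d c = BS K \<psi> i d (K * (c div K))"
    using eq[of "c mod K" d "c div K"] K cc(1) by simp
  also have "\<dots> = BS K \<psi> i d c'"
    using eq[of "c' mod K" d "c' div K"] K cc(2) q by simp
  finally have "of_nat (K ^ d) * \<psi> (i, c * K ^ d) = of_nat (K ^ d) * \<psi> (i, c' * K ^ d)"
    unfolding bs .
  then have v: "\<psi> (i, c * K ^ d) = \<psi> (i, c' * K ^ d)" using K by simp
  have "\<psi> (i, t) = \<psi> (i, c * K ^ d)" by (rule Suc.IH) (use K in \<open>simp add: c_def\<close>)
  also have "\<dots> = \<psi> (i, c' * K ^ d)" by (rule v)
  also have "\<dots> = \<psi> (i, t')" by (rule Suc.IH) (use K in \<open>simp add: c'_def\<close>)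
  finally show ?case .
qed

lemma completeness:
  assumes K2: "K \<ge> 2" and \<psi>: "\<psi> \<in> l2" and h: "\<forall>a\<in>Idx K b. l2_inner (en K b a) \<psi> = 0"
  shows "\<psi> = (\<lambda>_. 0)"
proof
  fix x :: "nat \<times> nat"
  obtain i t where x: "x = (i, t)" by fastforce
  have K: "K > 0" using K2 by simp
  have c: "\<psi> (i, u) = \<psi> (i, 0)" for u
  proof (rule layer_const[OF K _, of _ _ u])
    show "BS K \<psi> i e (K * j + r) = BS K \<psi> i e (K * j)" if "r < K" for e j r
      by (rule BSeq[OF K h that])
    have "u < 2 ^ u" by (rule less_exp)
    also have "\<dots> \<le> K ^ u" using K2 by (intro power_mono) auto
    finally show "u div K ^ u = 0 div K ^ u" by simp
  qed
  have "\<psi> (i, 0) = 0" by (rule l2_const_zero[OF \<psi> c])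
  then show "\<psi> x = 0" using c x by simp
qed

theorem theorem1p4:
  fixes K :: nat and b :: real
  assumes "K \<ge> 2"
  shows "pure_point_spectrum (canopy_H K b) \<and>
    (\<exists>E. orthonormal_basis_l2 E \<and>
       (\<forall>\<phi>\<in>E. is_eigenfunction (canopy_H K b) \<phi> \<and> finite {x. \<phi> x \<noteq> 0}))"
proof -
  have K: "K > 0" using assms by simp
  let ?E = "en K b ` Idx K b"
  have pps: "pure_point_spectrum (canopy_H K b)"
    unfolding pure_point_spectrum_def
  proof (intro ballI impI)
    fix \<psi> :: "nat \<times> nat \<Rightarrow> complex"
    assume \<psi>: "\<psi> \<in> l2" and h: "\<forall>\<phi>. is_eigenfunction (canopy_H K b) \<phi> \<longrightarrow> l2_inner \<phi> \<psi> = 0"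
    have "\<forall>a\<in>Idx K b. l2_inner (en K b a) \<psi> = 0" using h en_eigen[OF K] by blast
    then show "\<psi> = (\<lambda>_. 0)" by (rule completeness[OF assms \<psi>])
  qed
  have sub: "?E \<subseteq> l2"
  proof
    fix \<phi> assume "\<phi> \<in> ?E"
    then obtain m j s lam where "\<phi> = en K b (m, j, s, lam)" by auto
    then show "\<phi> \<in> l2" using en_l2[OF K] by simp
  qed
  have orth: "\<forall>\<phi>\<in>?E. \<forall>\<psi>\<in>?E. l2_inner \<phi> \<psi> = (if \<phi> = \<psi> then 1 else 0)"
  proof (intro ballI)
    fix \<phi> \<psi> assume "\<phi> \<in> ?E" "\<psi> \<in> ?E"
    then obtain a a' where a: "a \<in> Idx K b" "\<phi> = en K b a" and a': "a' \<in> Idx K b" "\<psi> = en K b a'" by auto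
    show "l2_inner \<phi> \<psi> = (if \<phi> = \<psi> then 1 else 0)"
    proof (cases "\<phi> = \<psi>")
      case True then show ?thesis using inner_en[OF K a(1) a(1)] a by simp
    next
      case False then have "a \<noteq> a'" using a a' by auto
      then show ?thesis using inner_en[OF K a(1) a'(1)] a a' False by simp
    qed
  qed
  have comp: "\<forall>\<psi>\<in>l2. (\<forall>\<phi>\<in>?E. l2_inner \<phi> \<psi> = 0) \<longrightarrow> \<psi> = (\<lambda>_. 0)"
  proof (intro ballI impI)
    fix \<psi> :: "nat \<times> nat \<Rightarrow> complex" assume "\<psi> \<in> l2" "\<forall>\<phi>\<in>?E. l2_inner \<phi> \<psi> = 0"
    then show "\<psi> = (\<lambda>_. 0)" using completeness[OF assms] by blast
  qed
  have onb: "orthonormal_basis_l2 ?E"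
    unfolding orthonormal_basis_l2_def using sub orth comp by blast
  have eig: "\<forall>\<phi>\<in>?E. is_eigenfunction (canopy_H K b) \<phi> \<and> finite {x. \<phi> x \<noteq> 0}"
  proof
    fix \<phi> assume "\<phi> \<in> ?E"
    then obtain m j s lam where a: "(m, j, s, lam) \<in> Idx K b" "\<phi> = en K b (m, j, s, lam)" by auto
    have "{x. \<phi> x \<noteq> 0} \<subseteq> supp K m j" using en_supp a(2) by blast
    then have "finite {x. \<phi> x \<noteq> 0}" using finite_supp[OF K] finite_subset by blast
    then show "is_eigenfunction (canopy_H K b) \<phi> \<and> finite {x. \<phi> x \<noteq> 0}"
      using en_eigen[OF K a(1)] a(2) by simp
  qed
  show ?thesis using pps onb eig by blast
qed

end
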